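(* Let $k>0$ and $\ell\ge0$ be integers, $q=2^k$ and $Q=2^{\ell}$. Then the polynomial $(X^{q^2}+X^q+X)\circ X^{Q+1}=X^{q^2(Q+1)}+X^{q(Q+1)}+X^{Q+1}$ is injective on $u+\mathbb{F}_q$ for every $u\in\mathbb{F}_{q^3}$ if and only if $\gcd(q-1,Q+1)=1$, or equivalently, if and only if $\operatorname{ord}_2(k)\le\operatorname{ord}_2(\ell)$.
   Context: For a nonzero integer $N$, $\operatorname{ord}_2(N)$ is the largest integer $s\ge0$ with $2^s\mid N$, and $\operatorname{ord}_2(0)=\infty$. *)

theory Defs
  imports "HOL-Computational_Algebra.Computational_Algebra" "HOL-Library.Extended_Nat"
begin

definition ord2 :: "nat \<Rightarrow> enat" where
  "ord2 N = (if N = 0 then \<infinity> else enat (multiplicity (2::nat) N))"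

text \<open>The subfield F_q of a finite field of characteristic p containing it:
  the set of elements fixed by the q-Frobenius x \<mapsto> x^q.\<close>
definition subfield_of_order :: "nat \<Rightarrow> 'a::field set" where
  "subfield_of_order q = {a. a ^ q = a}"

end

theory Submission
  imports Defs "HOL-Number_Theory.Number_Theory"
begin


lemma fermat:
  fixes x :: "'a::{field,finite}"
  shows "x ^ card (UNIV::'a set) = x"
proof (cases "x = 0")
  case True thus ?thesis by (simp add: zero_power finite_UNIV_card_ge_0)
next
  case False
  let ?S = "UNIV - {0::'a}"
  have "(\<Prod>y\<in>?S. x * y) = (\<Prod>y\<in>?S. y)"
    by (rule prod.reindex_bij_witness[of _ "\<lambda>y. y / x" "\<lambda>y. x * y"]) (use False in auto)
  hence "x ^ card ?S * (\<Prod>y\<in>?S. y) = 1 * (\<Prod>y\<in>?S. y)"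
    by (simp add: prod.distrib)
  moreover have "(\<Prod>y\<in>?S. y) \<noteq> 0" by simp
  ultimately have 1: "x ^ card ?S = 1" by (metis mult_right_cancel)
  have 2: "card (UNIV::'a set) = Suc (card ?S)"
    by (metis card_Suc_Diff1 finite_class.finite_UNIV iso_tuple_UNIV_I)
  show ?thesis unfolding 2 using 1 by simp
qed

lemma frob:
  fixes a b :: "'a::comm_ring_1"
  assumes "(2::'a) = 0"
  shows "(a + b) ^ (2 ^ n) = a ^ (2 ^ n) + b ^ (2 ^ n)"
proof (induction n)
  case 0 then show ?case by simp
next
  case (Suc n)
  have sq: "(x + y)^2 = x^2 + y^2" for x y :: 'a
  proof -
    have "(x+y)^2 = x^2 + y^2 + 2*x*y" by (simp add: power2_eq_square algebra_simps)
    thus ?thesis using assms by simp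
  qed
  have e: "z ^ (2 ^ Suc n) = (z^(2^n))^2" for z :: 'a by (simp add: power_mult[symmetric] mult.commute)
  show ?case unfolding e Suc sq ..
qed

lemma roots_bound:
  assumes "r \<ge> 1"
  shows "card {x::'a::idom. x ^ r = 1} \<le> r"
proof -
  let ?p = "Polynomial.monom (1::'a) r + [:-1:]"
  have d: "degree ?p = r" using assms by (subst degree_add_eq_left) (auto simp: degree_monom_eq)
  hence "?p \<noteq> 0" using assms by auto
  from card_poly_roots_bound[OF this] d have "card {x. poly ?p x = 0} \<le> r" by simp
  moreover have "{x. poly ?p x = 0} = {x::'a. x ^ r = 1}" by (auto simp: poly_monom)
  ultimately show ?thesis by simp
qed

lemma fermat1:
  fixes x :: "'a::{field,finite}"
  assumes "x \<noteq> 0"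
  shows "x ^ (card (UNIV::'a set) - 1) = 1"
proof -
  have "card (UNIV::'a set) \<ge> 1" by (simp add: Suc_leI finite_UNIV_card_ge_0)
  then obtain m where m: "card (UNIV::'a set) = Suc m" by (cases "card (UNIV::'a set)") auto
  have "x * x ^ m = x * 1" using fermat[of x] m by simp
  thus ?thesis using m assms by simp
qed

lemma exists_root:
  assumes g: "g \<ge> 2" "g dvd card (UNIV::'a::{field,finite} set) - 1"
  shows "\<exists>z::'a. z \<noteq> 1 \<and> z ^ g = 1"
proof (rule ccontr)
  assume H: "\<not> ?thesis"
  let ?N = "card (UNIV::'a set)"
  let ?S = "UNIV - {0::'a}"
  obtain r where r: "?N - 1 = g * r" using g by (auto elim: dvdE)
  have cS: "card ?S = ?N - 1" by (simp add: card_Diff_singleton)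
  have "card ?S \<ge> 1"
  proof -
    have "{1::'a} \<subseteq> ?S" by auto
    hence "card {1::'a} \<le> card ?S" by (intro card_mono) auto
    thus ?thesis by simp
  qed
  hence r1: "r \<ge> 1" using cS r by (cases r) auto
  have inj: "inj_on (\<lambda>x. x ^ g) ?S"
  proof (rule inj_onI)
    fix x y assume xy: "x \<in> ?S" "y \<in> ?S" "x ^ g = y ^ g"
    have "(x / y) ^ g = 1" using xy by (simp add: power_divide)
    hence "x / y = 1" using H by blast
    thus "x = y" using xy by simp
  qed
  have sub: "(\<lambda>x. x ^ g) ` ?S \<subseteq> {y::'a. y ^ r = 1}"
  proof
    fix y assume "y \<in> (\<lambda>x. x ^ g) ` ?S"
    then obtain x where x: "x \<noteq> 0" "y = x ^ g" by auto
    have "y ^ r = x ^ (?N - 1)" using x r by (simp add: power_mult)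
    thus "y \<in> {y. y ^ r = 1}" using fermat1[OF x(1)] by simp
  qed
  have "card ?S = card ((\<lambda>x. x ^ g) ` ?S)" using inj by (simp add: card_image)
  also have "\<dots> \<le> card {y::'a. y ^ r = 1}" using sub by (intro card_mono) auto
  also have "\<dots> \<le> r" using roots_bound[OF r1] by simp
  finally have "g * r \<le> r" using cS r by simp
  thus False using mult_le_mono1[OF g(1), of r] r1 by linarith
qed



lemma plus1_dvd:
  fixes Y :: nat
  shows "odd n \<Longrightarrow> (Y + 1) dvd (Y ^ n + 1)" and "(Y + 1) dvd (Y ^ (2 * m) - 1)"
proof -
  have c: "[int Y = -1] (mod (int Y + 1))" by (simp add: cong_iff_dvd_diff)
  {
    assume "odd n"
    from cong_pow[OF c, of n] have "[int Y ^ n = -1] (mod (int Y + 1))" using \<open>odd n\<close> by simp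
    hence "(int Y + 1) dvd (int Y ^ n + 1)" by (simp add: cong_iff_dvd_diff)
    hence "int (Y + 1) dvd int (Y ^ n + 1)" by (simp add: add.commute)
    thus "(Y + 1) dvd (Y ^ n + 1)" by (simp only: of_nat_dvd_iff)
  }
  from cong_pow[OF c, of "2*m"] have "[int Y ^ (2*m) = 1] (mod (int Y + 1))" by simp
  hence "(int Y + 1) dvd (int Y ^ (2*m) - 1)" by (simp add: cong_iff_dvd_diff)
  moreover have "Y ^ (2 * m) \<ge> 1 \<or> Y = 0" by (metis One_nat_def Suc_leI neq0_conv power_not_zero)
  ultimately have "int (Y + 1) dvd int (Y ^ (2*m) - 1)"
    by (cases "Y = 0") (auto simp: of_nat_diff zero_power add.commute)
  thus "(Y + 1) dvd (Y ^ (2 * m) - 1)" by (simp only: of_nat_dvd_iff)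
qed

lemma oddk: "k > 0 \<Longrightarrow> odd ((2::nat)^k - 1)"
proof -
  assume "k > 0"
  then obtain j where j: "k = Suc j" by (cases k) auto
  have "odd (2 * 2^j - (1::nat))" by (simp add: odd_pos)
  thus ?thesis using j by simp
qed

lemma NT:
  fixes k l :: nat
  assumes "k > 0"
  shows "gcd ((2::nat)^k - 1) (2^l+1) = 1 \<longleftrightarrow> ord2 k \<le> ord2 l"
proof (cases "l = 0")
  case True
  have "odd ((2::nat)^k - 1)" using oddk[OF assms] .
  hence "coprime ((2::nat)^k - 1) 2" by (simp add: coprime_commute)
  hence g: "gcd ((2::nat)^k - 1) 2 = 1" by (rule coprime_imp_gcd_eq_1)
  have g2: "gcd ((2::nat)^k - 1) (2^l+1) = 1" unfolding True power_0 one_add_one by (rule g)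
  show ?thesis using True g2 by (simp add: ord2_def)
next
  case False
  define a where "a = multiplicity (2::nat) k"
  define b where "b = multiplicity (2::nat) l"
  obtain k' where k': "k = 2^a * k'" "\<not> 2 dvd k'" unfolding a_def using multiplicity_decompose'[of k 2] assms by auto
  obtain l' where l': "l = 2^b * l'" "\<not> 2 dvd l'" unfolding b_def using multiplicity_decompose'[of l 2] False by auto
  have oe: "ord2 k \<le> ord2 l \<longleftrightarrow> a \<le> b" using assms False by (simp add: ord2_def a_def b_def)
  define d where "d = gcd ((2::nat)^k - 1) (2^l+1)"
  have d1: "d dvd 2^k - 1" and d2: "d dvd 2^l + 1" unfolding d_def by auto
  have dodd: "odd d" using d1 oddk[OF assms] by (meson dvd_trans)
  have d0: "d > 0" using dodd by (cases d) auto
  show ?thesis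
  proof (cases "a \<le> b")
    case True
    have cop: "coprime d 2" using dodd by (simp add: coprime_commute)
    have c1: "[2^k = 1] (mod d)" using d1 by (simp add: cong_altdef_nat)
    have fe: "(2::nat)^(2*l) - 1 = (2^l - 1) * (2^l + 1)"
    proof -
      have sq: "x*x - 1 = (x - 1)*(x+1)" for x :: nat by (cases x) (auto simp: algebra_simps)
      have "(2::nat)^(2*l) = 2^l * 2^l" by (simp add: mult_2 power_add)
      thus ?thesis using sq by simp
    qed
    have "d dvd 2^(2*l) - 1" unfolding fe using d2 by (rule dvd_mult)
    hence c2: "[2^(2*l) = 1] (mod d)" by (simp add: cong_altdef_nat)
    define od where "od = ord d 2"
    have "od dvd k" using c1 ord_divides unfolding od_def by blast
    hence o1: "od dvd 2^a * k'" using k'(1) by simp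
    have "od dvd 2 * l" using c2 ord_divides unfolding od_def by blast
    hence o2: "od dvd 2^b * (2 * l')" using l'(1) by (metis mult.commute mult.left_commute)
    have "(2::nat)^a dvd 2^b" using True by (simp add: le_imp_power_dvd)
    hence o1': "od dvd 2^b * k'" using o1 by (meson dvd_trans mult_dvd_mono dvd_refl)
    have "od dvd gcd (2^b * k') (2^b * (2 * l'))" using o1' o2 by simp
    also have "\<dots> = 2^b * gcd k' (2 * l')" by (simp add: gcd_mult_distrib_nat)
    also have "gcd k' (2 * l') = gcd k' l'"
      using k'(2) by (intro gcd_mult_right_left_cancel) (simp add: coprime_commute)
    finally have "od dvd 2^b * gcd k' l'" .
    hence "od dvd l" using l' by (meson dvd_trans mult_dvd_mono dvd_refl gcd_dvd2)
    hence "[2^l = 1] (mod d)" unfolding od_def using ord_divides by blast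
    hence dd: "d dvd 2^l - 1" by (simp add: cong_altdef_nat)
    have "d dvd (2^l + 1) - (2^l - 1)" by (rule dvd_diff_nat[OF d2 dd])
    moreover have "(2::nat)^l + 1 - (2^l - 1) = 2" by (simp add: Suc_leI)
    ultimately have "d dvd 2" by simp
    hence "d = 1" using dodd by (metis dvd_refl dvd_trans one_dvd two_is_prime_nat prime_nat_iff)
    thus ?thesis using oe True unfolding d_def by simp
  next
    case False
    define Y where "Y = (2::nat)^(2^b)"
    obtain m where m: "k = 2^b * (2 * m)"
    proof -
      have "a = b + 1 + (a - b - 1)" using False by simp
      hence "k = 2^b * (2 * (2^(a-b-1) * k'))" using k'(1) by (metis power_add power_one_right mult.assoc)
      thus ?thesis using that by blast
    qed
    have "Y + 1 dvd Y ^ l' + 1" using l'(2) by (rule plus1_dvd(1))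
    hence e1: "Y + 1 dvd 2^l + 1" unfolding Y_def l'(1) by (simp add: power_mult)
    have "Y + 1 dvd Y ^ (2*m) - 1" by (rule plus1_dvd(2))
    hence e2: "Y + 1 dvd 2^k - 1" unfolding Y_def m by (simp add: power_mult)
    have "Y + 1 dvd d" unfolding d_def using e1 e2 by simp
    hence "Y + 1 \<le> d" using d0 by (simp add: dvd_imp_le)
    moreover have "Y \<ge> 1" unfolding Y_def by simp
    ultimately have "d \<noteq> 1" by simp
    thus ?thesis using oe False unfolding d_def by simp
  qed
qed




lemma char2:
  assumes "card (UNIV::'a::{field,finite} set) = 2 ^ n" "n > 0"
  shows "(2::'a) = 0"
proof -
  have "(\<Sum>y\<in>UNIV. (1::'a) + y) = (\<Sum>y\<in>UNIV. y)"
    by (rule sum.reindex_bij_witness[of _ "\<lambda>y. y - 1" "\<lambda>y. 1 + y"]) auto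
  hence "of_nat (card (UNIV::'a set)) * (1::'a) = 0"
    by (simp add: sum.distrib)
  hence "(2::'a) ^ n = 0" using assms(1) by simp
  thus ?thesis by simp
qed


lemma injpow:
  fixes x y :: "'a::field"
  assumes G: "gcd (q - 1) P = 1" and P: "P > 0" and q: "q > 0"
    and x: "x ^ q = x" and y: "y ^ q = y" and e: "x ^ P = y ^ P"
  shows "x = y"
proof -
  obtain c j where cj: "P * c = (q - 1) * j + gcd P (q - 1)" using bezout_nat[of P "q - 1"] P by auto
  hence cj': "P * c = (q - 1) * j + 1" using G by (simp add: gcd.commute)
  have inv: "z ^ q = z \<Longrightarrow> z \<noteq> 0 \<Longrightarrow> z = (z ^ P) ^ c" for z :: 'a
  proof -
    assume z: "z ^ q = z" "z \<noteq> 0"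
    obtain m where m: "q = Suc m" using q by (cases q) auto
    have "z * z ^ m = z * 1" using z m by simp
    hence zm: "z ^ (q - 1) = 1" using z m by simp
    have "(z ^ P) ^ c = z ^ ((q - 1) * j + 1)" by (simp add: cj' flip: power_mult)
    also have "\<dots> = z" unfolding power_add power_mult zm by simp
    finally show ?thesis by simp
  qed
  show ?thesis
  proof (cases "x = 0 \<or> y = 0")
    case True
    thus ?thesis using e P by (auto simp: zero_power)
  next
    case False
    thus ?thesis using inv[OF x] inv[OF y] e by metis
  qed
qed

lemma frob2:
  fixes a b :: "'a::comm_ring_1"
  assumes "(2::'a) = 0"
  shows "(a + b + c) ^ (2 ^ n) = a ^ (2 ^ n) + b ^ (2 ^ n) + c ^ (2 ^ n)"
  using frob[OF assms] by simp

lemma KEY: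
  fixes u a :: "'a::field" and k l :: nat
  assumes two: "(2::'a) = 0"
    and a: "a ^ (2^k) = a"
  defines "t \<equiv> u ^ ((2^k)^2) + u ^ (2^k) + u"
  defines "f \<equiv> \<lambda>x::'a. x ^ ((2 ^ k)\<^sup>2 * (2 ^ l + 1)) + x ^ (2 ^ k * (2 ^ l + 1)) + x ^ (2 ^ l + 1)"
  shows "f (u + a) = f u + t ^ (2^l+1) + (t + a) ^ (2^l+1)"
proof -
  define q where "q = (2::nat)^k"
  define Q where "Q = (2::nat)^l"
  have qq: "q^2 = 2^(2*k)" unfolding q_def by (simp add: power_mult[symmetric] mult.commute)
  define L where "L = (\<lambda>z::'a. z ^ (q^2) + z ^ q + z)"
  have pm: "x ^ (m * n) = (x ^ n) ^ m" for x :: 'a and m n by (metis power_mult mult.commute)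
  have fL: "f x = L (x ^ (Q+1))" for x
    unfolding f_def L_def q_def Q_def pm[of _ "(2^k)^2"] pm[of _ "2^k"] ..
  have addq: "(y + z) ^ q = y ^ q + z ^ q" for y z :: 'a unfolding q_def by (rule frob[OF two])
  have addq2: "(y + z) ^ (q^2) = y ^ (q^2) + z ^ (q^2)" for y z :: 'a unfolding qq by (rule frob[OF two])
  have addQ: "(y + z) ^ Q = y ^ Q + z ^ Q" for y z :: 'a unfolding Q_def by (rule frob[OF two])
  have Ladd: "L (y + z) = L y + L z" for y z unfolding L_def addq addq2 by (simp add: algebra_simps)
  have Fq2: "c ^ (q^2) = c" if "c ^ q = c" for c :: 'a
    using that by (simp add: power2_eq_square power_mult)
  have Lmul: "L (c * z) = c * L z" if "c ^ q = c" for c z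
    unfolding L_def using that Fq2[OF that] by (simp add: power_mult_distrib algebra_simps)
  have three: "c + c + c = c" for c :: 'a
  proof -
    have "c + c + c = 2 * c + c" by (simp add: algebra_simps)
    thus ?thesis using two by simp
  qed
  have Lc: "L c = c" if "c ^ q = c" for c unfolding L_def using that Fq2[OF that] three by simp
  have LQ: "L (z ^ Q) = (L z) ^ Q" for z
  proof -
    have "(L z) ^ Q = (z^(q^2))^Q + (z^q)^Q + z^Q" unfolding L_def Q_def by (rule frob2[OF two])
    thus ?thesis unfolding L_def by (simp add: mult.commute flip: power_mult)
  qed
  have aq: "a ^ q = a" using a q_def by simp
  have aQ: "(a ^ Q) ^ q = a ^ Q" by (metis aq mult.commute power_mult)
  have aP: "(a ^ (Q+1)) ^ q = a ^ (Q+1)" by (metis aq mult.commute power_mult)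
  have t: "t = L u" unfolding t_def L_def q_def ..
  have e: "(u + a) ^ (Q + 1) = u ^ (Q+1) + a * u ^ Q + a ^ Q * u + a ^ (Q+1)"
    by (simp add: addQ algebra_simps)
  have "f (u + a) = L (u ^ (Q+1) + a * u ^ Q + a ^ Q * u + a ^ (Q+1))" by (simp only: fL e)
  also have "\<dots> = L (u ^ (Q+1)) + L (a * u ^ Q) + L (a ^ Q * u) + L (a ^ (Q+1))" by (simp only: Ladd)
  also have "\<dots> = L (u ^ (Q+1)) + a * L (u ^ Q) + a ^ Q * L u + a ^ (Q+1)"
    by (simp only: Lmul[OF aq] Lmul[OF aQ] Lc[OF aP])
  also have "\<dots> = f u + a * t ^ Q + a ^ Q * t + a ^ (Q+1)" by (simp add: fL LQ t)
  also have "\<dots> = f u + t ^ (Q+1) + (t + a) ^ (Q+1)"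
  proof -
    have "t ^ (Q+1) + (t + a) ^ (Q+1) = 2 * (t^Q * t) + a * t ^ Q + a ^ Q * t + a ^ (Q+1)"
      by (simp add: addQ algebra_simps)
    thus ?thesis using two by simp
  qed
  finally show ?thesis unfolding Q_def .
qed



theorem lemma3p2:
  fixes k l :: nat
  assumes "k > 0"
    and "card (UNIV :: 'a::{field,finite} set) = (2::nat) ^ (3 * k)"
  shows "((\<forall>u::'a. inj_on
             (\<lambda>x. x ^ ((2 ^ k)\<^sup>2 * (2 ^ l + 1)) + x ^ (2 ^ k * (2 ^ l + 1)) + x ^ (2 ^ l + 1))
             ((\<lambda>a. u + a) ` subfield_of_order (2 ^ k)))
          \<longleftrightarrow> gcd ((2::nat) ^ k - 1) (2 ^ l + 1) = 1)
       \<and> (gcd ((2::nat) ^ k - 1) (2 ^ l + 1) = 1 \<longleftrightarrow> ord2 k \<le> ord2 l)"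
proof (intro conjI)
  show "(gcd ((2::nat) ^ k - 1) (2 ^ l + 1) = 1 \<longleftrightarrow> ord2 k \<le> ord2 l)" using NT[OF assms(1)] .
next
  define f where "f = (\<lambda>x::'a. x ^ ((2 ^ k)\<^sup>2 * (2 ^ l + 1)) + x ^ (2 ^ k * (2 ^ l + 1)) + x ^ (2 ^ l + 1))"
  define q where "q = (2::nat)^k"
  define P where "P = (2::nat)^l + 1"
  have two: "(2::'a) = 0" using char2[OF assms(2)] assms(1) by simp
  have q0: "q > 0" unfolding q_def by simp
  have P0: "P > 0" unfolding P_def by simp
  have N: "card (UNIV::'a set) = q^2 * q" unfolding assms(2) q_def
    by (simp add: power_mult[symmetric] power_add[symmetric] mult.commute)
  have fer: "z ^ (q^2 * q) = z" for z :: 'a using fermat[of z] N by simp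
  have one3: "(1::'a) + 1 + 1 = 1" using two by (metis add_0 one_add_one)
  show "(\<forall>u::'a. inj_on f ((\<lambda>a. u + a) ` subfield_of_order (2 ^ k)))
          \<longleftrightarrow> gcd ((2::nat) ^ k - 1) (2 ^ l + 1) = 1"
  proof
    assume H: "\<forall>u::'a. inj_on f ((\<lambda>a. u + a) ` subfield_of_order (2 ^ k))"
    show "gcd ((2::nat) ^ k - 1) (2 ^ l + 1) = 1"
    proof (rule ccontr)
      define g where "g = gcd (q - 1) P"
      assume "gcd ((2::nat) ^ k - 1) (2 ^ l + 1) \<noteq> 1"
      hence g1: "g \<noteq> 1" unfolding g_def q_def P_def .
      have "g > 0" unfolding g_def using P0 by simp
      hence g2: "g \<ge> 2" using g1 by simp
      have "q - 1 dvd q^2 * q - 1"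
      proof -
        have "q^2 * q - 1 = (q - 1) * (q^2 + q + 1)" using q0
          by (cases q) (auto simp: power2_eq_square algebra_simps)
        thus ?thesis by simp
      qed
      hence "g dvd card (UNIV::'a set) - 1" unfolding g_def N by (meson dvd_trans gcd_dvd1)
      then obtain z :: 'a where z: "z \<noteq> 1" "z ^ g = 1" using exists_root[OF g2] by blast
      have zq1: "z ^ (q - 1) = 1" using z(2) unfolding g_def by (metis dvd_def gcd_dvd1 power_mult power_one)
      have zP: "z ^ P = 1" using z(2) unfolding g_def by (metis dvd_def gcd_dvd2 power_mult power_one)
      have zq: "z ^ q = z"
      proof -
        obtain m where m: "q = Suc m" using q0 by (cases q) auto
        show ?thesis using zq1 m by simp
      qed
      have fz: "f z = 1"
      proof -
        have pm: "x ^ (m * n) = (x ^ n) ^ m" for x :: 'a and m n by (metis power_mult mult.commute)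
        have "f z = (z ^ P) ^ (q^2) + (z ^ P) ^ q + z ^ P" unfolding f_def P_def q_def
          pm[of _ "(2^k)^2"] pm[of _ "2^k"] ..
        thus ?thesis using zP one3 by simp
      qed
      have f1: "f 1 = 1" unfolding f_def using one3 by simp
      have mem: "z \<in> subfield_of_order (2^k)" "(1::'a) \<in> subfield_of_order (2^k)"
        unfolding subfield_of_order_def using zq q_def by auto
      have "inj_on f ((\<lambda>a. 0 + a) ` subfield_of_order (2 ^ k))" using H by blast
      moreover have "z \<in> (\<lambda>a. 0 + a) ` subfield_of_order (2 ^ k)" "(1::'a) \<in> (\<lambda>a. 0 + a) ` subfield_of_order (2 ^ k)"
        using mem by auto
      ultimately have "z = 1" using fz f1 by (metis inj_on_def)
      thus False using z(1) by simp
    qed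
  next
    assume G: "gcd ((2::nat) ^ k - 1) (2 ^ l + 1) = 1"
    show "\<forall>u::'a. inj_on f ((\<lambda>a. u + a) ` subfield_of_order (2 ^ k))"
    proof
      fix u :: 'a
      define t where "t = u ^ ((2^k)^2) + u ^ (2^k) + u"
      have tq: "t ^ q = t"
      proof -
        have qq: "q^2 = 2^(2*k)" unfolding q_def by (simp add: power_mult[symmetric] mult.commute)
        have "t ^ q = (u ^ (q^2)) ^ q + (u ^ q) ^ q + u ^ q" unfolding t_def q_def by (rule frob2[OF two])
        also have "\<dots> = u + u ^ (q^2) + u ^ q"
          using fer[of u] by (simp add: power2_eq_square flip: power_mult)
        finally show ?thesis unfolding t_def q_def by (simp add: algebra_simps)
      qed
      show "inj_on f ((\<lambda>a. u + a) ` subfield_of_order (2 ^ k))"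
      proof (rule inj_onI)
        fix x y assume "x \<in> (\<lambda>a. u + a) ` subfield_of_order (2 ^ k)" "y \<in> (\<lambda>a. u + a) ` subfield_of_order (2 ^ k)"
          and fxy: "f x = f y"
        then obtain a b where ab: "x = u + a" "y = u + b" "a ^ q = a" "b ^ q = b"
          unfolding subfield_of_order_def q_def by auto
        have "f (u + a) = f u + t ^ P + (t + a) ^ P" unfolding f_def t_def P_def
          by (rule KEY[OF two]) (use ab q_def in simp)
        moreover have "f (u + b) = f u + t ^ P + (t + b) ^ P" unfolding f_def t_def P_def
          by (rule KEY[OF two]) (use ab q_def in simp)
        ultimately have e: "(t + a) ^ P = (t + b) ^ P" using fxy ab by simp
        have "t + a = t + b"
        proof (rule injpow[OF _ P0 q0 _ _ e])
          show "gcd (q - 1) P = 1" using G unfolding q_def P_def .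
          show "(t + a) ^ q = t + a" using frob[OF two, of t a k] tq ab q_def by simp
          show "(t + b) ^ q = t + b" using frob[OF two, of t b k] tq ab q_def by simp
        qed
        thus "x = y" using ab by simp
      qed
    qed
  qed
qed

end
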